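(* Let $p$ be a prime, $q$ a power of $p$, and $m_0 \in \mathbb{N}$. Assume that for every $k \in \mathbb{N}$ and all $d_1,\dots,d_{m_0} \in \mathbb{N}$, the set $B(p^k; d_1,\dots,d_{m_0}; 1,\dots,1)$ is an $\overline{\mathbb{F}_p}(t)$-DML set over split torus. Let $c_1,\dots,c_{m_0+1} \in \mathbb{N}$. If $B(q; c_1,\dots,c_{m_0+1}; 1,\dots,1)$ is an $\overline{\mathbb{F}_p}(t)$-DML set over split torus, then $B(q; c_1,\dots,c_{m_0}, q c_{m_0+1}; 1,\dots,1)$ is also an $\overline{\mathbb{F}_p}(t)$-DML set over split torus.
   Context: For a power $q$ of $p$, $m \in \mathbb{N}$ and $c_1,\dots,c_m \in \mathbb{N}$, $B(q; c_1,\dots,c_m; 1,\dots,1) = \{ \sum_{j=1}^m c_j q^{n_j} : n_1,\dots,n_m \in \mathbb{N}_0\}$. For a field $K$ and a quasi-projective variety $X$ over $K$, a set $S \subseteq \mathbb{N}_0$ is a $K$-DML set over $X$ if there exist an endomorphism $\Phi$ of $X$ (a morphism $X \to X$ defined over $K$), a point $\alpha \in X(K)$ and a closed subvariety $V \subseteq X$ defined over $K$ (not necessarily irreducible) such that $S = \{ n \in \mathbb{N}_0 : \Phi^n(\alpha) \in V(K)\}$. $S$ is a $K$-DML set over split torus if it is a $K$-DML set over $\mathbb{G}_m^k$ for some $k \in \mathbb{N}$. *)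

theory Defs
  imports "HOL-Computational_Algebra.Computational_Algebra"
          "HOL-Computational_Algebra.Fraction_Field"
          "HOL-Library.Poly_Mapping"
begin

text \<open>The coefficient tuple (c_1,...,c_m) is the list c (c_j = c ! (j-1)).\<close>
definition Bset :: "nat \<Rightarrow> nat list \<Rightarrow> nat set" where
  "Bset q c = {(\<Sum>j<length c. (c ! j) * q ^ (n j)) | n :: nat \<Rightarrow> nat. True}"

text \<open>Laurent polynomials over K in the variables x_0, x_1, ...: finitely supported
  maps from exponent vectors (finitely supported nat => int) to K.  With the
  convolution product this is the ring K[x_i^{+-1}]. The coordinate ring of the
  split torus G_m^k is the subring of those using only x_0..x_{k-1}.\<close>
type_synonym 'a lpoly = "(nat \<Rightarrow>\<^sub>0 int) \<Rightarrow>\<^sub>0 'a"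

definition in_vars :: "nat \<Rightarrow> ((nat \<Rightarrow>\<^sub>0 int) \<Rightarrow>\<^sub>0 'a::zero) \<Rightarrow> bool" where
  "in_vars k f \<longleftrightarrow> (\<forall>e \<in> Poly_Mapping.keys f. Poly_Mapping.keys e \<subseteq> {..<k})"

definition lpeval :: "'a::field lpoly \<Rightarrow> (nat \<Rightarrow> 'a) \<Rightarrow> 'a" where
  "lpeval f x = (\<Sum>e \<in> Poly_Mapping.keys f. Poly_Mapping.lookup f e * (\<Prod>i \<in> Poly_Mapping.keys e. x i powi Poly_Mapping.lookup e i))"

text \<open>K-points of G_m^k: tuples of k nonzero elements (normalised to 0 beyond index k).\<close>
definition torus_points :: "nat \<Rightarrow> (nat \<Rightarrow> 'a::field) set" where
  "torus_points k = {x. (\<forall>i<k. x i \<noteq> 0) \<and> (\<forall>i\<ge>k. x i = 0)}"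

text \<open>An endomorphism of G_m^k defined over K is given by a K-algebra endomorphism of the
  coordinate ring K[x_1^{+-1},...,x_k^{+-1}], i.e. by images Phi_0,...,Phi_{k-1} of the
  variables that are units of that ring.\<close>
definition torus_endo :: "nat \<Rightarrow> (nat \<Rightarrow> 'a::field lpoly) \<Rightarrow> bool" where
  "torus_endo k \<Phi> \<longleftrightarrow>
     (\<forall>i<k. in_vars k (\<Phi> i) \<and> (\<exists>g. in_vars k g \<and> \<Phi> i * g = 1))"

definition endo_map :: "nat \<Rightarrow> (nat \<Rightarrow> 'a::field lpoly) \<Rightarrow> (nat \<Rightarrow> 'a) \<Rightarrow> (nat \<Rightarrow> 'a)" where
  "endo_map k \<Phi> x = (\<lambda>i. if i < k then lpeval (\<Phi> i) x else 0)"

definition zero_set :: "nat \<Rightarrow> 'a::field lpoly set \<Rightarrow> (nat \<Rightarrow> 'a) set" where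
  "zero_set k F = {x \<in> torus_points k. \<forall>f\<in>F. lpeval f x = 0}"

definition DML_set_torus :: "'a::field itself \<Rightarrow> nat \<Rightarrow> nat set \<Rightarrow> bool" where
  "DML_set_torus K k S \<longleftrightarrow>
     (\<exists>(\<Phi> :: nat \<Rightarrow> 'a lpoly) \<alpha> F.
        torus_endo k \<Phi> \<and> \<alpha> \<in> torus_points k \<and> finite F \<and> (\<forall>f\<in>F. in_vars k f) \<and>
        S = {n. (endo_map k \<Phi> ^^ n) \<alpha> \<in> zero_set k F})"

definition DML_split_torus :: "'a::field itself \<Rightarrow> nat set \<Rightarrow> bool" where
  "DML_split_torus K S \<longleftrightarrow> (\<exists>k\<ge>1. DML_set_torus K k S)"

text \<open>A field is (isomorphic to) an algebraic closure of F_p iff it is algebraically closed,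
  of characteristic p, and algebraic over its prime field (the image of of_nat).\<close>
definition is_alg_closure_Fp :: "'a::alg_closed_field itself \<Rightarrow> nat \<Rightarrow> bool" where
  "is_alg_closure_Fp K p \<longleftrightarrow> CHAR('a) = p \<and>
     (\<forall>x::'a. \<exists>P::'a poly. P \<noteq> 0 \<and> (\<forall>i. coeff P i \<in> range of_nat) \<and> poly P x = 0)"

end

theory Submission
  imports Defs
begin

definition mon :: "(nat \<Rightarrow>\<^sub>0 int) \<Rightarrow> (nat \<Rightarrow> 'a::field) \<Rightarrow> 'a" where
  "mon e x = (\<Prod>i \<in> Poly_Mapping.keys e. x i powi Poly_Mapping.lookup e i)"

lemma lpeval_mon: "lpeval f x = (\<Sum>e\<in>Poly_Mapping.keys f. Poly_Mapping.lookup f e * mon e x)"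
  by (simp add: lpeval_def mon_def)

lemma mon_superset:
  assumes "finite B" "Poly_Mapping.keys e \<subseteq> B"
  shows "mon e x = (\<Prod>i\<in>B. x i powi Poly_Mapping.lookup e i)"
  unfolding mon_def
  by (rule prod.mono_neutral_left) (use assms in \<open>auto simp: in_keys_iff\<close>)

lemma mon_add:
  assumes "\<forall>i. x i \<noteq> 0"
  shows "mon (e + e') x = mon e x * mon e' x"
proof -
  let ?B = "Poly_Mapping.keys e \<union> Poly_Mapping.keys e'"
  have "mon (e + e') x = (\<Prod>i\<in>?B. x i powi Poly_Mapping.lookup (e+e') i)"
    by (rule mon_superset) (auto dest: keys_add[THEN subsetD])
  also have "\<dots> = (\<Prod>i\<in>?B. x i powi Poly_Mapping.lookup e i * x i powi Poly_Mapping.lookup e' i)"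
    by (rule prod.cong) (auto simp: lookup_add power_int_add assms)
  also have "\<dots> = mon e x * mon e' x"
    by (simp add: prod.distrib mon_superset[of ?B])
  finally show ?thesis .
qed

lemma mon_zero [simp]: "mon 0 x = 1"
  by (simp add: mon_def)

lemma lpeval_superset:
  assumes "finite A" "Poly_Mapping.keys f \<subseteq> A"
  shows "lpeval f x = (\<Sum>e\<in>A. Poly_Mapping.lookup f e * mon e x)"
  unfolding lpeval_mon
  by (rule sum.mono_neutral_left) (use assms in \<open>auto simp: in_keys_iff\<close>)

lemma lpeval_add: "lpeval (f + g) x = lpeval f x + lpeval g x"
proof -
  let ?A = "Poly_Mapping.keys f \<union> Poly_Mapping.keys g"
  have "lpeval (f + g) x = (\<Sum>e\<in>?A. Poly_Mapping.lookup (f+g) e * mon e x)"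
    by (rule lpeval_superset) (auto dest: keys_add[THEN subsetD])
  also have "\<dots> = lpeval f x + lpeval g x"
    by (simp add: lookup_add distrib_right sum.distrib lpeval_superset[of ?A])
  finally show ?thesis .
qed

lemma lpeval_diff: "lpeval (f - g) x = lpeval f x - lpeval g x"
proof -
  let ?A = "Poly_Mapping.keys f \<union> Poly_Mapping.keys g"
  have "lpeval (f - g) x = (\<Sum>e\<in>?A. Poly_Mapping.lookup (f-g) e * mon e x)"
    by (rule lpeval_superset) (auto simp: in_keys_iff lookup_minus)
  also have "\<dots> = lpeval f x - lpeval g x"
    by (simp add: lookup_minus left_diff_distrib sum_subtractf lpeval_superset[of ?A])
  finally show ?thesis .
qed

lemma lpeval_zero [simp]: "lpeval 0 x = 0"
  by (simp add: lpeval_def)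

lemma lpeval_sum: "lpeval (sum g I) x = (\<Sum>i\<in>I. lpeval (g i) x)"
  by (induction I rule: infinite_finite_induct) (auto simp: lpeval_add)

lemma lpeval_single: "lpeval (Poly_Mapping.single e c) x = c * mon e x"
  by (simp add: lpeval_mon)

lemma pm_decomp: "f = (\<Sum>e\<in>Poly_Mapping.keys f. Poly_Mapping.single e (Poly_Mapping.lookup f e))"
proof (rule poly_mapping_eqI)
  fix k
  show "Poly_Mapping.lookup f k = Poly_Mapping.lookup (\<Sum>e\<in>Poly_Mapping.keys f. Poly_Mapping.single e (Poly_Mapping.lookup f e)) k"
    by (auto simp: lookup_sum lookup_single when_def in_keys_iff)
qed

lemma lpeval_mult:
  assumes "\<forall>i. x i \<noteq> 0"
  shows "lpeval (f * g) x = lpeval f x * lpeval g x"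
proof -
  have "f * g = (\<Sum>e\<in>Poly_Mapping.keys f. Poly_Mapping.single e (Poly_Mapping.lookup f e)) *
      (\<Sum>e\<in>Poly_Mapping.keys g. Poly_Mapping.single e (Poly_Mapping.lookup g e))"
    using pm_decomp[of f] pm_decomp[of g] by simp
  also have "\<dots> = (\<Sum>e\<in>Poly_Mapping.keys f. \<Sum>e'\<in>Poly_Mapping.keys g.
      Poly_Mapping.single (e + e') (Poly_Mapping.lookup f e * Poly_Mapping.lookup g e'))"
    by (simp add: sum_product mult_single)
  finally have "lpeval (f * g) x = (\<Sum>e\<in>Poly_Mapping.keys f. \<Sum>e'\<in>Poly_Mapping.keys g.
      (Poly_Mapping.lookup f e * mon e x) * (Poly_Mapping.lookup g e' * mon e' x))"
    by (simp add: lpeval_sum lpeval_single mon_add[OF assms] mult_ac)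
  also have "\<dots> = lpeval f x * lpeval g x"
    by (simp add: lpeval_mon sum_product)
  finally show ?thesis .
qed

lemma lpeval_one [simp]: "lpeval 1 x = 1"
  by (simp add: lpeval_def)

definition var :: "nat \<Rightarrow> 'a::field lpoly" where
  "var i = Poly_Mapping.single (Poly_Mapping.single i 1) 1"

lemma lpeval_var [simp]: "lpeval (var i) x = x i"
  by (simp add: var_def lpeval_single mon_def)

lemma var_unit: "var i * Poly_Mapping.single (Poly_Mapping.single i (-1)) 1 = 1"
  by (simp add: var_def mult_single flip: single_add)

lemma in_vars_var: "i < k \<Longrightarrow> in_vars k (var i)"
  by (simp add: in_vars_def var_def)

lemma in_vars_var_inv: "i < k \<Longrightarrow> in_vars k (Poly_Mapping.single (Poly_Mapping.single i (-1)) (1::'a::field))"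
  by (simp add: in_vars_def)

lemma in_vars_mono: "in_vars k f \<Longrightarrow> k \<le> k' \<Longrightarrow> in_vars k' f"
  unfolding in_vars_def by (meson lessThan_subset_iff order_trans)

lemma in_vars_mult: "in_vars k f \<Longrightarrow> in_vars k g \<Longrightarrow> in_vars k (f * g)"
  unfolding in_vars_def
  by (auto dest!: keys_mult[THEN subsetD] keys_add[THEN subsetD])

lemma in_vars_one: "in_vars k 1"
  by (simp add: in_vars_def)

lemma in_vars_diff: "in_vars k f \<Longrightarrow> in_vars k g \<Longrightarrow> in_vars k (f - g)"
proof -
  assume a: "in_vars k f" "in_vars k g"
  have "e \<in> Poly_Mapping.keys f \<or> e \<in> Poly_Mapping.keys g" if "e \<in> Poly_Mapping.keys (f - g)" for e
    using that by (auto simp: in_keys_iff lookup_minus)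
  then show ?thesis using a unfolding in_vars_def by blast
qed

lemma lpeval_cong_vars:
  assumes "in_vars k f" "\<forall>i<k. x i = y i"
  shows "lpeval f x = lpeval f y"
  unfolding lpeval_def
proof (rule sum.cong[OF refl], rule arg_cong[where f="\<lambda>u. _ * u"], rule prod.cong[OF refl])
  fix e i assume "e \<in> Poly_Mapping.keys f" "i \<in> Poly_Mapping.keys e"
  then have "i < k" using assms(1) unfolding in_vars_def by blast
  then show "x i powi Poly_Mapping.lookup e i = y i powi Poly_Mapping.lookup e i" using assms(2) by simp
qed


definition shk :: "nat \<Rightarrow> (nat \<Rightarrow>\<^sub>0 int) \<Rightarrow> (nat \<Rightarrow>\<^sub>0 int)" where
  "shk s e = (\<Sum>i\<in>Poly_Mapping.keys e. Poly_Mapping.single (i + s) (Poly_Mapping.lookup e i))"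

lemma lookup_shk: "Poly_Mapping.lookup (shk s e) j = (if s \<le> j then Poly_Mapping.lookup e (j - s) else 0)"
proof -
  have "Poly_Mapping.lookup (shk s e) j = (\<Sum>i\<in>Poly_Mapping.keys e. (Poly_Mapping.lookup e i when i + s = j))"
    by (simp add: shk_def lookup_sum lookup_single)
  also have "\<dots> = (if s \<le> j then Poly_Mapping.lookup e (j - s) else 0)"
  proof (cases "s \<le> j \<and> j - s \<in> Poly_Mapping.keys e")
    case True
    then show ?thesis
      by (subst sum.remove[of _ "j - s"]) (auto simp: when_def split: if_splits intro!: sum.neutral)
  next
    case False
    then show ?thesis
      by (auto simp: when_def in_keys_iff intro!: sum.neutral)
  qed
  finally show ?thesis .
qed

lemma shk_add: "shk s (e + e') = shk s e + shk s e'"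
  by (rule poly_mapping_eqI) (simp add: lookup_shk lookup_add)

lemma shk_zero [simp]: "shk s 0 = 0"
  by (simp add: shk_def)

lemma keys_shk: "Poly_Mapping.keys (shk s e) = (\<lambda>i. i + s) ` Poly_Mapping.keys e"
proof -
  have "j \<in> Poly_Mapping.keys (shk s e) \<longleftrightarrow> j \<in> (\<lambda>i. i + s) ` Poly_Mapping.keys e" for j
  proof (cases "s \<le> j")
    case True
    have 1: "j \<in> Poly_Mapping.keys (shk s e) \<longleftrightarrow> j - s \<in> Poly_Mapping.keys e"
      using True by (simp add: in_keys_iff lookup_shk)
    have 2: "j \<in> (\<lambda>i. i + s) ` Poly_Mapping.keys e \<longleftrightarrow> j - s \<in> Poly_Mapping.keys e"
    proof
      assume "j - s \<in> Poly_Mapping.keys e"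
      moreover have "j = (j - s) + s" using True by simp
      ultimately show "j \<in> (\<lambda>i. i + s) ` Poly_Mapping.keys e" by (metis image_eqI)
    qed auto
    show ?thesis using 1 2 by blast
  qed (auto simp: in_keys_iff lookup_shk)
  then show ?thesis by blast
qed

lemma inj_shk: "inj (shk s)"
proof (rule injI)
  fix e e' assume "shk s e = shk s e'"
  then have "Poly_Mapping.lookup (shk s e) (i + s) = Poly_Mapping.lookup (shk s e') (i + s)" for i by simp
  then show "e = e'" by (intro poly_mapping_eqI) (simp add: lookup_shk)
qed

lemma mon_shk: "mon (shk s e) x = mon e (\<lambda>i. x (i + s))"
  unfolding mon_def keys_shk
  by (subst prod.reindex) (auto simp: inj_on_def lookup_shk)

definition ren :: "nat \<Rightarrow> 'a::field lpoly \<Rightarrow> 'a lpoly" where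
  "ren s f = (\<Sum>e\<in>Poly_Mapping.keys f. Poly_Mapping.single (shk s e) (Poly_Mapping.lookup f e))"

lemma ren_superset:
  assumes "finite A" "Poly_Mapping.keys f \<subseteq> A"
  shows "ren s f = (\<Sum>e\<in>A. Poly_Mapping.single (shk s e) (Poly_Mapping.lookup f e))"
  unfolding ren_def
  by (rule sum.mono_neutral_left) (use assms in \<open>auto simp: in_keys_iff\<close>)

lemma ren_add: "ren s (f + g) = ren s f + ren s g"
proof -
  let ?A = "Poly_Mapping.keys f \<union> Poly_Mapping.keys g"
  have "ren s (f + g) = (\<Sum>e\<in>?A. Poly_Mapping.single (shk s e) (Poly_Mapping.lookup (f+g) e))"
    by (rule ren_superset) (auto dest: keys_add[THEN subsetD])
  also have "\<dots> = ren s f + ren s g"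
    by (simp add: lookup_add single_add sum.distrib ren_superset[of ?A])
  finally show ?thesis .
qed

lemma ren_zero [simp]: "ren s 0 = 0"
  by (simp add: ren_def)

lemma ren_sum: "ren s (sum g I) = (\<Sum>i\<in>I. ren s (g i))"
  by (induction I rule: infinite_finite_induct) (auto simp: ren_add)

lemma ren_single: "ren s (Poly_Mapping.single e c) = Poly_Mapping.single (shk s e) c"
  by (simp add: ren_def)

lemma ren_mult: "ren s (f * g) = ren s f * ren s g"
proof -
  have fg: "f * g = (\<Sum>e\<in>Poly_Mapping.keys f. \<Sum>e'\<in>Poly_Mapping.keys g.
      Poly_Mapping.single (e + e') (Poly_Mapping.lookup f e * Poly_Mapping.lookup g e'))"
    by (subst pm_decomp[of f], subst pm_decomp[of g]) (simp add: sum_product mult_single)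
  have "ren s f * ren s g = (\<Sum>e\<in>Poly_Mapping.keys f. Poly_Mapping.single (shk s e) (Poly_Mapping.lookup f e)) *
     (\<Sum>e\<in>Poly_Mapping.keys g. Poly_Mapping.single (shk s e) (Poly_Mapping.lookup g e))"
    by (simp add: ren_def)
  also have "\<dots> = ren s (f * g)"
    unfolding fg by (simp add: sum_product mult_single ren_sum ren_single shk_add)
  finally show ?thesis by simp
qed

lemma ren_one [simp]: "ren s 1 = 1"
  by (simp add: ren_def)

lemma lpeval_ren: "lpeval (ren s f) x = lpeval f (\<lambda>i. x (i + s))"
  unfolding ren_def lpeval_sum lpeval_single mon_shk by (simp add: lpeval_mon)

lemma in_vars_ren: "in_vars k f \<Longrightarrow> in_vars (k + s) (ren s f)"
proof -
  assume a: "in_vars k f"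
  have sub: "Poly_Mapping.keys (ren s f) \<subseteq> shk s ` Poly_Mapping.keys f"
  proof -
    have "Poly_Mapping.keys (ren s f) \<subseteq> (\<Union>e\<in>Poly_Mapping.keys f. Poly_Mapping.keys (Poly_Mapping.single (shk s e) (Poly_Mapping.lookup f e)))"
      unfolding ren_def by (rule keys_sum)
    also have "\<dots> \<subseteq> shk s ` Poly_Mapping.keys f" by (auto split: if_splits)
    finally show ?thesis .
  qed
  show ?thesis unfolding in_vars_def
  proof
    fix e' assume "e' \<in> Poly_Mapping.keys (ren s f)"
    then obtain e where e: "e \<in> Poly_Mapping.keys f" "e' = shk s e" using sub by blast
    have "Poly_Mapping.keys e \<subseteq> {..<k}" using a e(1) unfolding in_vars_def by blast
    then show "Poly_Mapping.keys e' \<subseteq> {..<k + s}" unfolding e(2) keys_shk by auto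
  qed
qed


lemma torus_mult:
  assumes "x \<in> torus_points k" "in_vars k f" "in_vars k g"
  shows "lpeval (f * g) x = lpeval f x * lpeval g x"
proof -
  define x' where "x' = (\<lambda>i. if i < k then x i else 1)"
  have nz: "\<forall>i. x' i \<noteq> 0" using assms(1) by (auto simp: x'_def torus_points_def)
  have ag: "\<forall>i<k. x i = x' i" by (simp add: x'_def)
  have "lpeval (f * g) x = lpeval (f * g) x'"
    by (rule lpeval_cong_vars[OF in_vars_mult[OF assms(2,3)] ag])
  also have "\<dots> = lpeval f x' * lpeval g x'" by (rule lpeval_mult[OF nz])
  also have "\<dots> = lpeval f x * lpeval g x"
    using lpeval_cong_vars[OF assms(2) ag] lpeval_cong_vars[OF assms(3) ag] by simp
  finally show ?thesis .
qed

lemma endo_torus: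
  assumes "torus_endo k \<Phi>" "x \<in> torus_points k"
  shows "endo_map k \<Phi> x \<in> torus_points k"
proof -
  have "lpeval (\<Phi> i) x \<noteq> 0" if "i < k" for i
  proof -
    obtain g where g: "in_vars k g" "\<Phi> i * g = 1" "in_vars k (\<Phi> i)"
      using assms(1) \<open>i < k\<close> unfolding torus_endo_def by blast
    have "lpeval (\<Phi> i) x * lpeval g x = 1"
      using torus_mult[OF assms(2) g(3) g(1)] g(2) by simp
    then show ?thesis by auto
  qed
  then show ?thesis by (auto simp: torus_points_def endo_map_def)
qed

lemma iter_torus:
  assumes "torus_endo k \<Phi>" "x \<in> torus_points k"
  shows "(endo_map k \<Phi> ^^ n) x \<in> torus_points k"
  by (induction n) (auto simp: assms endo_torus)

definition joinp :: "nat \<Rightarrow> (nat \<Rightarrow> 'a) \<Rightarrow> (nat \<Rightarrow> 'a) \<Rightarrow> nat \<Rightarrow> 'a" where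
  "joinp k1 x y = (\<lambda>v. if v < k1 then x v else y (v - k1))"

lemma joinp_shift [simp]: "(\<lambda>i. joinp k1 x y (i + k1)) = y"
  by (simp add: joinp_def)

lemma joinp_torus:
  "x \<in> torus_points k1 \<Longrightarrow> y \<in> torus_points k2 \<Longrightarrow> joinp k1 x y \<in> torus_points (k1 + k2)"
  by (auto simp: torus_points_def joinp_def)

lemma DML_union:
  fixes K :: "'a::field itself"
  assumes "DML_set_torus K k1 S1" "DML_set_torus K k2 S2"
  shows "DML_set_torus K (k1 + k2) (S1 \<union> S2)"
proof -
  obtain \<Phi>1 :: "nat \<Rightarrow> 'a lpoly" and \<alpha>1 F1 where h1: "torus_endo k1 \<Phi>1" "\<alpha>1 \<in> torus_points k1" "finite F1"
    "\<forall>f\<in>F1. in_vars k1 f" "S1 = {n. (endo_map k1 \<Phi>1 ^^ n) \<alpha>1 \<in> zero_set k1 F1}"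
    using assms(1) unfolding DML_set_torus_def by blast
  obtain \<Phi>2 :: "nat \<Rightarrow> 'a lpoly" and \<alpha>2 F2 where h2: "torus_endo k2 \<Phi>2" "\<alpha>2 \<in> torus_points k2" "finite F2"
    "\<forall>f\<in>F2. in_vars k2 f" "S2 = {n. (endo_map k2 \<Phi>2 ^^ n) \<alpha>2 \<in> zero_set k2 F2}"
    using assms(2) unfolding DML_set_torus_def by blast
  define \<Psi> where "\<Psi> = (\<lambda>v. if v < k1 then \<Phi>1 v else ren k1 (\<Phi>2 (v - k1)))"
  define F where "F = (\<lambda>(f1, f2). f1 * ren k1 f2) ` (F1 \<times> F2)"
  define \<beta> where "\<beta> = joinp k1 \<alpha>1 \<alpha>2"
  have iv1: "in_vars k1 (\<Phi>1 v)" if "v < k1" for v using h1(1) that by (simp add: torus_endo_def)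
  have iv2: "in_vars k2 (\<Phi>2 v)" if "v < k2" for v using h2(1) that by (simp add: torus_endo_def)
  have step: "endo_map (k1 + k2) \<Psi> (joinp k1 x y) = joinp k1 (endo_map k1 \<Phi>1 x) (endo_map k2 \<Phi>2 y)" for x y
  proof
    fix v
    show "endo_map (k1 + k2) \<Psi> (joinp k1 x y) v = joinp k1 (endo_map k1 \<Phi>1 x) (endo_map k2 \<Phi>2 y) v"
    proof (cases "v < k1")
      case True
      then show ?thesis
        using lpeval_cong_vars[OF iv1[OF True], of "joinp k1 x y" x]
        by (simp add: endo_map_def \<Psi>_def joinp_def)
    next
      case False
      then show ?thesis
        by (auto simp: endo_map_def \<Psi>_def joinp_def lpeval_ren)
    qed
  qed
  have iter: "(endo_map (k1 + k2) \<Psi> ^^ n) \<beta> = joinp k1 ((endo_map k1 \<Phi>1 ^^ n) \<alpha>1) ((endo_map k2 \<Phi>2 ^^ n) \<alpha>2)" for n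
    by (induction n) (simp_all add: \<beta>_def step)
  have endo: "torus_endo (k1 + k2) \<Psi>"
    unfolding torus_endo_def
  proof (intro allI impI)
    fix v assume v: "v < k1 + k2"
    show "in_vars (k1 + k2) (\<Psi> v) \<and> (\<exists>g. in_vars (k1 + k2) g \<and> \<Psi> v * g = 1)"
    proof (cases "v < k1")
      case True
      then obtain g where "in_vars k1 g" "\<Phi>1 v * g = 1" "in_vars k1 (\<Phi>1 v)"
        using h1(1) unfolding torus_endo_def by blast
      then show ?thesis using True in_vars_mono[of k1 _ "k1 + k2"] by (auto simp: \<Psi>_def)
    next
      case False
      then have v2: "v - k1 < k2" using v by simp
      then obtain g where g: "in_vars k2 g" "\<Phi>2 (v - k1) * g = 1" "in_vars k2 (\<Phi>2 (v - k1))"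
        using h2(1) unfolding torus_endo_def by blast
      have "ren k1 (\<Phi>2 (v - k1)) * ren k1 g = 1"
        using g(2) by (metis ren_mult ren_one)
      then show ?thesis using False in_vars_ren[OF g(1), of k1] in_vars_ren[OF g(3), of k1]
        by (auto simp: \<Psi>_def add.commute)
    qed
  qed
  have zs: "joinp k1 x y \<in> zero_set (k1 + k2) F \<longleftrightarrow> x \<in> zero_set k1 F1 \<or> y \<in> zero_set k2 F2"
    if x: "x \<in> torus_points k1" and y: "y \<in> torus_points k2" for x y
  proof -
    have jt: "joinp k1 x y \<in> torus_points (k1 + k2)" by (rule joinp_torus[OF x y])
    have ev: "lpeval (f1 * ren k1 f2) (joinp k1 x y) = lpeval f1 x * lpeval f2 y"
      if "f1 \<in> F1" "f2 \<in> F2" for f1 f2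
    proof -
      have a: "in_vars (k1 + k2) f1" using h1(4) that(1) in_vars_mono by fastforce
      have b: "in_vars (k1 + k2) (ren k1 f2)" using in_vars_ren[of k2 f2 k1] h2(4) that(2)
        by (simp add: add.commute)
      have "lpeval f1 (joinp k1 x y) = lpeval f1 x"
        using lpeval_cong_vars[of k1 f1 "joinp k1 x y" x] h1(4) that(1) by (simp add: joinp_def)
      then show ?thesis using torus_mult[OF jt a b] by (simp add: lpeval_ren)
    qed
    have "joinp k1 x y \<in> zero_set (k1 + k2) F \<longleftrightarrow> (\<forall>f1\<in>F1. \<forall>f2\<in>F2. lpeval f1 x * lpeval f2 y = 0)"
      using jt ev by (auto simp: zero_set_def F_def)
    also have "\<dots> \<longleftrightarrow> (\<forall>f1\<in>F1. lpeval f1 x = 0) \<or> (\<forall>f2\<in>F2. lpeval f2 y = 0)"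
      by auto
    finally show ?thesis using x y by (simp add: zero_set_def)
  qed
  have "S1 \<union> S2 = {n. (endo_map (k1 + k2) \<Psi> ^^ n) \<beta> \<in> zero_set (k1 + k2) F}"
    unfolding iter h1(5) h2(5)
    using zs[OF iter_torus[OF h1(1,2)] iter_torus[OF h2(1,2)]] by auto
  moreover have "\<beta> \<in> torus_points (k1 + k2)" unfolding \<beta>_def by (rule joinp_torus[OF h1(2) h2(2)])
  moreover have "finite F" using h1(3) h2(3) by (simp add: F_def)
  moreover have "\<forall>f\<in>F. in_vars (k1 + k2) f"
  proof
    fix f assume "f \<in> F"
    then obtain f1 f2 where "f1 \<in> F1" "f2 \<in> F2" "f = f1 * ren k1 f2" by (auto simp: F_def)
    then show "in_vars (k1 + k2) f"
      using h1(4) h2(4) in_vars_ren[of k2 f2 k1] in_vars_mono[of k1 f1 "k1 + k2"]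
      by (auto simp: add.commute intro!: in_vars_mult)
  qed
  ultimately show ?thesis using endo unfolding DML_set_torus_def by blast
qed


lemma arith_dvd_aux:
  fixes a n :: nat
  assumes "a \<ge> 1"
  shows "(a - 1 \<le> n \<and> a dvd (n - (a - 1))) \<longleftrightarrow> a dvd Suc n"
proof (cases "a - 1 \<le> n")
  case True
  then have "Suc n = (n - (a - 1)) + a" using assms by simp
  then show ?thesis using True by (metis dvd_add_left_iff dvd_refl)
next
  case False
  then have "0 < Suc n" "Suc n < a" by auto
  then show ?thesis using False by (auto dest: dvd_imp_le)
qed

lemma arith_div_aux:
  fixes a m b :: nat
  assumes "a \<ge> 1"
  shows "(a * m + b + a - 1 - b) div a = m"
proof -
  have "a * m + b + a - 1 - b = (a - 1) + m * a" using assms by (cases a) auto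
  moreover have "((a - 1) + m * a) div a = m + (a - 1) div a" using assms by (intro div_mult_self1) simp
  moreover have "(a - 1) div a = 0" using assms by simp
  ultimately show ?thesis by simp
qed

lemma DML_affine:
  fixes K :: "'a::field itself" and c :: 'a
  assumes "DML_set_torus K k S" "a \<ge> 1" "c \<noteq> 0" "c \<noteq> 1"
  shows "DML_set_torus K ((a + b) * (k + 1)) ((\<lambda>n. a * n + b) ` S)"
proof -
  obtain \<Phi> :: "nat \<Rightarrow> 'a lpoly" and \<alpha> F where h: "torus_endo k \<Phi>" "\<alpha> \<in> torus_points k" "finite F"
    "\<forall>f\<in>F. in_vars k f" "S = {n. (endo_map k \<Phi> ^^ n) \<alpha> \<in> zero_set k F}"
    using assms(1) unfolding DML_set_torus_def by blast
  define L where "L = a + b"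
  define w where "w = k + 1"
  have L1: "a - 1 < L" "b < L" using assms(2) by (auto simp: L_def)
  define \<Phi>' :: "nat \<Rightarrow> 'a lpoly" where "\<Phi>' = (\<lambda>i. if i < k then \<Phi> i else var k)"
  define \<Psi> where "\<Psi> = (\<lambda>v. if v < w then ren ((a - 1) * w) (\<Phi>' v) else var (v - w))"
  define ext :: "(nat \<Rightarrow> 'a) \<Rightarrow> 'a \<Rightarrow> nat \<Rightarrow> 'a" where
    "ext = (\<lambda>x y i. if i < k then x i else if i = k then y else 0)"
  define flat :: "(nat \<Rightarrow> nat \<Rightarrow> 'a) \<Rightarrow> nat \<Rightarrow> 'a" where
    "flat = (\<lambda>R v. if v < L * w then R (v div w) (v mod w) else 0)"
  define stepR :: "(nat \<Rightarrow> nat \<Rightarrow> 'a) \<Rightarrow> nat \<Rightarrow> nat \<Rightarrow> 'a" where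
    "stepR = (\<lambda>R j. if j = 0 then endo_map w \<Phi>' (R (a - 1)) else R (j - 1))"
  define P where "P = (\<lambda>m. (endo_map k \<Phi> ^^ m) \<alpha>)"
  define mk where "mk = (\<lambda>n j. ext (P ((n + a - 1 - j) div a)) (if j \<le> n \<and> a dvd (n - j) then 1 else c))"
  have ivP: "in_vars k (\<Phi> i)" if "i < k" for i using h(1) that by (simp add: torus_endo_def)
  have ivP': "in_vars w (\<Phi>' v)" if "v < w" for v
    using that ivP[of v] in_vars_mono[of k "\<Phi> v" w] by (auto simp: \<Phi>'_def w_def in_vars_var)
  have wpos: "0 < w" by (simp add: w_def)
  have flat_at: "flat R (i + j * w) = R j i" if "i < w" "j < L" for R i j
  proof -
    have "i + j * w < L * w"
    proof -
      have "i + j * w < w + j * w" using that(1) by simp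
      also have "\<dots> = (Suc j) * w" by simp
      also have "\<dots> \<le> L * w" using that(2) by (intro mult_right_mono) auto
      finally show ?thesis .
    qed
    then show ?thesis using that(1) by (simp add: flat_def)
  qed
  have step: "endo_map (L * w) \<Psi> (flat R) = flat (stepR R)" for R
  proof
    fix v
    show "endo_map (L * w) \<Psi> (flat R) v = flat (stepR R) v"
    proof (cases "v < w")
      case True
      have "w \<le> L * w" using L1 by simp
      then have vL: "v < L * w" using True by linarith
      have "lpeval (ren ((a - 1) * w) (\<Phi>' v)) (flat R) = lpeval (\<Phi>' v) (R (a - 1))"
        unfolding lpeval_ren
        by (rule lpeval_cong_vars[OF ivP'[OF True]]) (use flat_at L1(1) in auto)
      then show ?thesis using True vL
        by (simp add: endo_map_def \<Psi>_def flat_def stepR_def)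
    next
      case False
      then obtain u where u: "v = u + w" by (metis add.commute le_add_diff_inverse not_less)
      show ?thesis
      proof (cases "v < L * w")
        case True
        then have "u < L * w" using u by simp
        moreover have "(u + w) div w = u div w + 1" "(u + w) mod w = u mod w" using wpos by simp_all
        ultimately show ?thesis using True u
          by (simp add: endo_map_def \<Psi>_def flat_def stepR_def)
      next
        case False
        then show ?thesis by (simp add: endo_map_def flat_def)
      qed
    qed
  qed
  have flat_cong: "flat R = flat R'" if "\<forall>j<L. R j = R' j" for R R'
  proof
    fix v
    have "v < L * w \<Longrightarrow> v div w < L" by (simp add: div_less_iff_less_mult wpos)
    then show "flat R v = flat R' v" using that by (simp add: flat_def)
  qed
  have ext_step: "endo_map w \<Phi>' (ext x y) = ext (endo_map k \<Phi> x) y" for x y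
  proof
    fix i
    show "endo_map w \<Phi>' (ext x y) i = ext (endo_map k \<Phi> x) y i"
    proof (cases "i < k")
      case True
      have "lpeval (\<Phi> i) (ext x y) = lpeval (\<Phi> i) x"
        by (rule lpeval_cong_vars[OF ivP[OF True]]) (simp add: ext_def)
      then show ?thesis using True by (simp add: endo_map_def \<Phi>'_def ext_def w_def)
    next
      case False
      then show ?thesis by (simp add: endo_map_def \<Phi>'_def ext_def w_def)
    qed
  qed
  have closed: "\<forall>j<L. (stepR ^^ n) (mk 0) j = mk n j" for n
  proof (induction n)
    case 0
    then show ?case by simp
  next
    case (Suc n)
    show ?case
    proof (intro allI impI)
      fix j assume j: "j < L"
      show "(stepR ^^ Suc n) (mk 0) j = mk (Suc n) j"
      proof (cases "j = 0")
        case True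
        have "(stepR ^^ Suc n) (mk 0) j = endo_map w \<Phi>' (mk n (a - 1))"
          using True Suc L1 by (simp add: stepR_def)
        also have "\<dots> = ext (P (Suc ((n + a - 1 - (a - 1)) div a)))
            (if a - 1 \<le> n \<and> a dvd (n - (a - 1)) then 1 else c)"
          by (simp add: mk_def ext_step P_def)
        also have "\<dots> = mk (Suc n) j"
        proof -
          have "Suc ((n + a - 1 - (a - 1)) div a) = (Suc n + a - 1) div a"
            using assms(2) by (simp add: div_add_self2)
          then show ?thesis using True arith_dvd_aux[OF assms(2), of n] by (simp add: mk_def)
        qed
        finally show ?thesis .
      next
        case False
        have "(stepR ^^ Suc n) (mk 0) j = mk n (j - 1)"
          using False Suc j by (simp add: stepR_def)
        also have "\<dots> = mk (Suc n) j"
        proof -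
          have "n + a - 1 - (j - 1) = Suc n + a - 1 - j" using False assms(2) by simp
          moreover have "(j - 1 \<le> n) = (j \<le> Suc n)" "n - (j - 1) = Suc n - j" using False by auto
          ultimately show ?thesis by (simp add: mk_def)
        qed
        finally show ?thesis .
      qed
    qed
  qed
  have iter: "(endo_map (L * w) \<Psi> ^^ n) (flat (mk 0)) = flat (mk n)" for n
  proof -
    have "(endo_map (L * w) \<Psi> ^^ n) (flat (mk 0)) = flat ((stepR ^^ n) (mk 0))"
      by (induction n) (simp_all add: step)
    then show ?thesis using flat_cong closed by metis
  qed
  have Ptorus: "P m \<in> torus_points k" for m unfolding P_def by (rule iter_torus[OF h(1,2)])
  have ztorus: "flat (mk n) \<in> torus_points (L * w)" for n
  proof -
    have "flat (mk n) v \<noteq> 0" if "v < L * w" for v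
    proof -
      have "v mod w < Suc k" using wpos by (simp add: w_def)
      then have "v mod w < k \<or> v mod w = k" by (simp add: less_Suc_eq)
      then show ?thesis using that Ptorus assms(3)
        by (auto simp: flat_def mk_def ext_def torus_points_def w_def)
    qed
    then show ?thesis by (auto simp: torus_points_def flat_def)
  qed
  define F' where "F' = ren (b * w) ` F \<union> {var (b * w + k) - 1}"
  have bk: "b * w + k < L * w"
  proof -
    have "b * w + k < Suc b * w" by (simp add: w_def)
    also have "\<dots> \<le> L * w" using L1 by (intro mult_right_mono) auto
    finally show ?thesis .
  qed
  have zs: "flat (mk n) \<in> zero_set (L * w) F' \<longleftrightarrow>
      (b \<le> n \<and> a dvd (n - b)) \<and> P ((n + a - 1 - b) div a) \<in> zero_set k F" for n
  proof -
    have e1: "lpeval (ren (b * w) f) (flat (mk n)) = lpeval f (P ((n + a - 1 - b) div a))" if "f \<in> F" for f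
    proof -
      have fa: "flat (mk n) (i + b * w) = mk n b i" if "i < k" for i
        by (rule flat_at) (use that L1 in \<open>auto simp: w_def\<close>)
      have "lpeval (ren (b * w) f) (flat (mk n)) = lpeval f (mk n b)"
        unfolding lpeval_ren
        by (rule lpeval_cong_vars[of k]) (use h(4) that fa in auto)
      also have "\<dots> = lpeval f (P ((n + a - 1 - b) div a))"
        by (rule lpeval_cong_vars[of k]) (use h(4) that in \<open>auto simp: mk_def ext_def\<close>)
      finally show ?thesis .
    qed
    have "flat (mk n) (b * w + k) = mk n b k"
      using flat_at[of k b "mk n"] L1 by (simp add: w_def add.commute)
    then have e2: "lpeval (var (b * w + k) - 1) (flat (mk n)) = (if b \<le> n \<and> a dvd (n - b) then 1 else c) - 1"
      by (simp add: lpeval_diff mk_def ext_def)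
    show ?thesis
      using ztorus[of n] Ptorus e1 e2 assms(4)
      by (auto simp: zero_set_def F'_def)
  qed
  have Sset: "(\<lambda>n. a * n + b) ` S = {n. (endo_map (L * w) \<Psi> ^^ n) (flat (mk 0)) \<in> zero_set (L * w) F'}"
  proof -
    have "n \<in> (\<lambda>n. a * n + b) ` S \<longleftrightarrow> (b \<le> n \<and> a dvd (n - b)) \<and> P ((n + a - 1 - b) div a) \<in> zero_set k F" for n
    proof
      assume "n \<in> (\<lambda>n. a * n + b) ` S"
      then obtain m where m: "m \<in> S" "n = a * m + b" by blast
      have "(n + a - 1 - b) div a = m" using m(2) arith_div_aux[OF assms(2)] by simp
      then show "(b \<le> n \<and> a dvd (n - b)) \<and> P ((n + a - 1 - b) div a) \<in> zero_set k F"
        using m h(5) by (simp add: P_def)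
    next
      assume a1: "(b \<le> n \<and> a dvd (n - b)) \<and> P ((n + a - 1 - b) div a) \<in> zero_set k F"
      then obtain m where m: "n - b = a * m" by blast
      then have n: "n = a * m + b" using a1 by linarith
      have "(n + a - 1 - b) div a = m" using n arith_div_aux[OF assms(2)] by simp
      then show "n \<in> (\<lambda>n. a * n + b) ` S" using a1 n h(5) by (auto simp: P_def)
    qed
    then show ?thesis unfolding iter zs by blast
  qed
  have endo: "torus_endo (L * w) \<Psi>"
    unfolding torus_endo_def
  proof (intro allI impI)
    fix v assume v: "v < L * w"
    show "in_vars (L * w) (\<Psi> v) \<and> (\<exists>g. in_vars (L * w) g \<and> \<Psi> v * g = 1)"
    proof (cases "v < w")
      case True
      have aw: "w + (a - 1) * w \<le> L * w"
      proof -
        have "w + (a - 1) * w = a * w" using assms(2) by (cases a) auto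
        then show ?thesis by (simp add: L_def)
      qed
      obtain g where g: "in_vars w g" "\<Phi>' v * g = 1"
      proof (cases "v < k")
        case True
        then obtain g where "in_vars k g" "\<Phi> v * g = 1" using h(1) unfolding torus_endo_def by blast
        then show ?thesis using that True in_vars_mono[of k g w] by (auto simp: \<Phi>'_def w_def)
      next
        case False
        then have "v = k" using True \<open>v < w\<close> by (simp add: w_def)
        then have e: "\<Phi>' v = var k" by (simp add: \<Phi>'_def)
        have "in_vars w (Poly_Mapping.single (Poly_Mapping.single k (- 1)) (1::'a))"
          by (rule in_vars_var_inv) (simp add: w_def)
        then show ?thesis using that var_unit[of k] e by metis
      qed
      have "ren ((a - 1) * w) (\<Phi>' v) * ren ((a - 1) * w) g = 1" using g(2) by (metis ren_mult ren_one)
      moreover have "in_vars (L * w) (ren ((a - 1) * w) (\<Phi>' v))"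
        using in_vars_ren[OF ivP'[OF True], of "(a-1)*w"] in_vars_mono aw by blast
      moreover have "in_vars (L * w) (ren ((a - 1) * w) g)"
        using in_vars_ren[OF g(1), of "(a-1)*w"] in_vars_mono aw by blast
      ultimately show ?thesis using True by (auto simp: \<Psi>_def)
    next
      case False
      then have "v - w < L * w" using v by simp
      then show ?thesis using False var_unit[of "v - w"] in_vars_var[of "v - w"] in_vars_var_inv[of "v - w"]
        by (auto simp: \<Psi>_def)
    qed
  qed
  have fin: "finite F'" using h(3) by (simp add: F'_def)
  have ivF: "\<forall>f\<in>F'. in_vars (L * w) f"
  proof
    fix f assume "f \<in> F'"
    then consider (a) g where "g \<in> F" "f = ren (b * w) g" | (b) "f = var (b * w + k) - 1"
      by (auto simp: F'_def)
    then show "in_vars (L * w) f"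
    proof cases
      case a
      have "k + b * w \<le> L * w" using bk by simp
      then show ?thesis using a h(4) in_vars_ren[of k g "b * w"] in_vars_mono by blast
    next
      case b
      then show ?thesis using bk by (simp add: in_vars_diff in_vars_var in_vars_one)
    qed
  qed
  have "DML_set_torus K (L * w) ((\<lambda>n. a * n + b) ` S)"
    unfolding DML_set_torus_def using endo ztorus[of 0] fin ivF Sset by blast
  then show ?thesis by (simp add: L_def w_def)
qed


lemma split_affine:
  fixes K :: "'a::field itself" and c :: 'a
  assumes "DML_split_torus K S" "a \<ge> 1" "c \<noteq> 0" "c \<noteq> 1"
  shows "DML_split_torus K ((\<lambda>n. a * n + b) ` S)"
proof -
  obtain k where "k \<ge> 1" "DML_set_torus K k S" using assms(1) unfolding DML_split_torus_def by blast
  then have "DML_set_torus K ((a + b) * (k + 1)) ((\<lambda>n. a * n + b) ` S)"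
    using DML_affine assms(2-4) by blast
  moreover have "(a + b) * (k + 1) \<ge> 1" using assms(2) by simp
  ultimately show ?thesis unfolding DML_split_torus_def by blast
qed

lemma split_union:
  assumes "DML_split_torus K S1" "DML_split_torus K S2"
  shows "DML_split_torus K (S1 \<union> S2)"
proof -
  obtain k1 where "k1 \<ge> 1" "DML_set_torus K k1 S1" using assms(1) unfolding DML_split_torus_def by blast
  moreover obtain k2 where "k2 \<ge> 1" "DML_set_torus K k2 S2" using assms(2) unfolding DML_split_torus_def by blast
  ultimately have "DML_set_torus K (k1 + k2) (S1 \<union> S2)" "k1 + k2 \<ge> 1" using DML_union by auto
  then show ?thesis unfolding DML_split_torus_def by blast
qed

lemma split_UN:
  "(n::nat) \<ge> 1 \<Longrightarrow> (\<forall>i<n. DML_split_torus K (A i)) \<Longrightarrow> DML_split_torus K (\<Union>i<n. A i)"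
proof (induction n)
  case 0
  then show ?case by simp
next
  case (Suc n)
  show ?case
  proof (cases "n = 0")
    case True
    then have "(\<Union>i<Suc n. A i) = A 0" by (simp add: lessThan_Suc)
    then show ?thesis using Suc.prems True by simp
  next
    case False
    then have "DML_split_torus K (\<Union>i<n. A i)" using Suc by simp
    moreover have "DML_split_torus K (A n)" using Suc.prems by simp
    ultimately show ?thesis using split_union by (simp add: lessThan_Suc Un_commute)
  qed
qed

lemma Bset_mem: "x \<in> Bset q l \<longleftrightarrow> (\<exists>n. x = (\<Sum>j<length l. l ! j * q ^ n j))"
  by (auto simp: Bset_def)

lemma sum_c:
  assumes "length c = m0 + 1"
  shows "(\<Sum>j<length c. c ! j * q ^ n j) = (\<Sum>j<m0. c ! j * q ^ n j) + c ! m0 * q ^ n m0"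
  using assms by simp

lemma sum_d:
  assumes "length c = m0 + 1"
  shows "(\<Sum>j<length (take m0 c @ [x]). (take m0 c @ [x]) ! j * q ^ n j) = (\<Sum>j<m0. c ! j * q ^ n j) + x * q ^ n m0"
proof -
  have l: "length (take m0 c @ [x]) = Suc m0" using assms by simp
  have "(\<Sum>j<m0. (take m0 c @ [x]) ! j * q ^ n j) = (\<Sum>j<m0. c ! j * q ^ n j)"
    by (rule sum.cong) (use assms in \<open>auto simp: nth_append\<close>)
  then show ?thesis unfolding l using assms by (simp add: nth_append)
qed

lemma sum_di:
  assumes "length c = m0 + 1" "i < m0"
  shows "(\<Sum>j<length ((take m0 c)[i := x]). ((take m0 c)[i := x]) ! j * q ^ n j) =
    x * q ^ n i + (\<Sum>j\<in>{..<m0} - {i}. c ! j * q ^ n j)"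
proof -
  have l: "length ((take m0 c)[i := x]) = m0" using assms by simp
  have "(\<Sum>j<m0. ((take m0 c)[i := x]) ! j * q ^ n j) =
      ((take m0 c)[i := x]) ! i * q ^ n i + (\<Sum>j\<in>{..<m0} - {i}. ((take m0 c)[i := x]) ! j * q ^ n j)"
    using assms(2) by (subst sum.remove[of _ i]) auto
  also have "(\<Sum>j\<in>{..<m0} - {i}. ((take m0 c)[i := x]) ! j * q ^ n j) = (\<Sum>j\<in>{..<m0} - {i}. c ! j * q ^ n j)"
    by (rule sum.cong) (use assms in auto)
  finally show ?thesis unfolding l using assms by simp
qed

lemma Bset_decomp:
  fixes c :: "nat list" and q m0 :: nat
  assumes "length c = m0 + 1" "q \<ge> 1"
  shows "Bset q (take m0 c @ [q * c ! m0]) =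
    (\<lambda>n. q * n + 0) ` Bset q c \<union> (\<Union>i<m0. (\<lambda>n. 1 * n + c ! i) ` Bset q ((take m0 c)[i := q * c ! m0]))"
  (is "?L = ?R")
proof
  show "?L \<subseteq> ?R"
  proof
    fix x assume "x \<in> ?L"
    then obtain n where x: "x = (\<Sum>j<m0. c ! j * q ^ n j) + q * c ! m0 * q ^ n m0"
      unfolding Bset_mem sum_d[OF assms(1)] by blast
    show "x \<in> ?R"
    proof (cases "\<exists>i<m0. n i = 0")
      case True
      then obtain i where i: "i < m0" "n i = 0" by blast
      define n' where "n' = n(i := n m0)"
      have "x = c ! i + (\<Sum>j\<in>{..<m0} - {i}. c ! j * q ^ n j) + q * c ! m0 * q ^ n m0"
        unfolding x using i by (subst sum.remove[of _ i]) auto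
      also have "(\<Sum>j\<in>{..<m0} - {i}. c ! j * q ^ n j) = (\<Sum>j\<in>{..<m0} - {i}. c ! j * q ^ n' j)"
        by (rule sum.cong) (auto simp: n'_def)
      finally have "x = 1 * (\<Sum>j<length ((take m0 c)[i := q * c ! m0]). ((take m0 c)[i := q * c ! m0]) ! j * q ^ n' j) + c ! i"
        unfolding sum_di[OF assms(1) i(1)] by (simp add: n'_def)
      moreover have "(\<Sum>j<length ((take m0 c)[i := q * c ! m0]). ((take m0 c)[i := q * c ! m0]) ! j * q ^ n' j)
          \<in> Bset q ((take m0 c)[i := q * c ! m0])" unfolding Bset_mem by blast
      ultimately have "x \<in> (\<lambda>n. 1 * n + c ! i) ` Bset q ((take m0 c)[i := q * c ! m0])"
        by (rule image_eqI)
      then show ?thesis using i by blast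
    next
      case False
      define n' where "n' = (\<lambda>j. if j < m0 then n j - 1 else n m0)"
      have "(\<Sum>j<m0. c ! j * q ^ n j) = q * (\<Sum>j<m0. c ! j * q ^ n' j)"
        unfolding sum_distrib_left
      proof (rule sum.cong)
        fix j assume "j \<in> {..<m0}"
        then have "n j = Suc (n' j)" using False by (auto simp: n'_def)
        then show "c ! j * q ^ n j = q * (c ! j * q ^ n' j)" by simp
      qed simp
      then have "x = q * (\<Sum>j<length c. c ! j * q ^ n' j) + 0"
        unfolding x sum_c[OF assms(1)] by (simp add: n'_def algebra_simps)
      moreover have "(\<Sum>j<length c. c ! j * q ^ n' j) \<in> Bset q c" unfolding Bset_mem by blast
      ultimately have "x \<in> (\<lambda>n. q * n + 0) ` Bset q c" by (rule image_eqI)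
      then show ?thesis by blast
    qed
  qed
next
  show "?R \<subseteq> ?L"
  proof
    fix x assume "x \<in> ?R"
    then consider (a) y where "y \<in> Bset q c" "x = q * y + 0"
      | (b) i y where "i < m0" "y \<in> Bset q ((take m0 c)[i := q * c ! m0])" "x = 1 * y + c ! i"
      by blast
    then show "x \<in> ?L"
    proof cases
      case a
      then obtain n where y: "y = (\<Sum>j<m0. c ! j * q ^ n j) + c ! m0 * q ^ n m0"
        unfolding Bset_mem sum_c[OF assms(1)] by blast
      define n' where "n' = (\<lambda>j. if j < m0 then Suc (n j) else n m0)"
      have "x = (\<Sum>j<m0. c ! j * q ^ n' j) + q * c ! m0 * q ^ n' m0"
        unfolding a(2) y by (simp add: n'_def algebra_simps sum_distrib_left)
      then show ?thesis unfolding Bset_mem sum_d[OF assms(1)] by blast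
    next
      case b
      then obtain n where y: "y = q * c ! m0 * q ^ n i + (\<Sum>j\<in>{..<m0} - {i}. c ! j * q ^ n j)"
        unfolding Bset_mem sum_di[OF assms(1) b(1)] by blast
      define n' where "n' = (n(i := 0))(m0 := n i)"
      have "(\<Sum>j<m0. c ! j * q ^ n' j) = c ! i + (\<Sum>j\<in>{..<m0} - {i}. c ! j * q ^ n' j)"
        using b(1) by (subst sum.remove[of _ i]) (auto simp: n'_def)
      also have "(\<Sum>j\<in>{..<m0} - {i}. c ! j * q ^ n' j) = (\<Sum>j\<in>{..<m0} - {i}. c ! j * q ^ n j)"
        by (rule sum.cong) (auto simp: n'_def)
      finally have "x = (\<Sum>j<m0. c ! j * q ^ n' j) + q * c ! m0 * q ^ n' m0"
        unfolding b(3) y by (simp add: n'_def)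
      then show ?thesis unfolding Bset_mem sum_d[OF assms(1)] by blast
    qed
  qed
qed

lemma fract_elem: "Fract [:0, 1:] 1 \<noteq> (0 :: 'k::field poly fract)" "Fract [:0, 1:] 1 \<noteq> (1 :: 'k::field poly fract)"
  by (simp_all add: Zero_fract_def One_fract_def eq_fract one_pCons)

theorem lemma3p4:
  fixes p q m0 :: nat and c :: "nat list"
  assumes "prime p"
    and "is_alg_closure_Fp TYPE('k::alg_closed_field) p"
    and "\<exists>e\<ge>1. q = p ^ e"
    and "m0 \<ge> 1"
    and "\<forall>k\<ge>1. \<forall>d. length d = m0 \<and> (\<forall>x\<in>set d. x \<ge> 1) \<longrightarrow>
           DML_split_torus TYPE('k poly fract) (Bset (p ^ k) d)"
    and "length c = m0 + 1" and "\<forall>x\<in>set c. x \<ge> 1"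
    and "DML_split_torus TYPE('k poly fract) (Bset q c)"
  shows "DML_split_torus TYPE('k poly fract) (Bset q (take m0 c @ [q * c ! m0]))"
proof -
  obtain e where e: "e \<ge> 1" "q = p ^ e" using assms(3) by blast
  have "p > 0" using assms(1) by (simp add: prime_gt_0_nat)
  then have "q > 0" using e by simp
  then have q1: "q \<ge> 1" by simp
  let ?c0 = "Fract [:0, 1:] 1 :: 'k poly fract"
  have A: "DML_split_torus TYPE('k poly fract) ((\<lambda>n. q * n + 0) ` Bset q c)"
    by (rule split_affine[OF assms(8) q1 fract_elem])
  have cm: "c ! m0 \<ge> 1" using assms(6,7) by simp
  have B: "DML_split_torus TYPE('k poly fract) ((\<lambda>n. 1 * n + c ! i) ` Bset q ((take m0 c)[i := q * c ! m0]))"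
    if i: "i < m0" for i
  proof -
    let ?d = "(take m0 c)[i := q * c ! m0]"
    have "length ?d = m0" using assms(6) by simp
    moreover have "\<forall>x\<in>set ?d. x \<ge> 1"
    proof
      fix x assume "x \<in> set ?d"
      then have "x \<in> set (take m0 c) \<or> x = q * c ! m0" using set_update_subset_insert by fastforce
      then show "x \<ge> 1" using assms(7) cm q1 by (auto dest: in_set_takeD)
    qed
    ultimately have "DML_split_torus TYPE('k poly fract) (Bset q ?d)"
      using assms(5) e by blast
    then show ?thesis by (rule split_affine[OF _ _ fract_elem]) simp
  qed
  have "DML_split_torus TYPE('k poly fract) (\<Union>i<m0. (\<lambda>n. 1 * n + c ! i) ` Bset q ((take m0 c)[i := q * c ! m0]))"
    by (rule split_UN[OF assms(4)]) (use B in blast)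
  then show ?thesis unfolding Bset_decomp[OF assms(6) q1] using A split_union by blast
qed

end
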